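(* Let $\mathfrak n=W\oplus\mathfrak z$ be a finite-dimensional 2-step nilpotent Lie algebra over a field of characteristic zero which is of TST type and satisfies $(\Lambda^2\mathfrak n)^{\mathfrak n}=\Lambda^2\mathfrak z$. Then every Lie bialgebra structure $\delta$ on $\mathfrak n$ is of the following form: there are $\delta_{\mathfrak z}$, $D^1,\dots,D^m$, $\varphi$ satisfying conditions (a), (b), (c) below such that $\delta(z)=\delta_{\mathfrak z}(z)$ for $z\in\mathfrak z$ and $\delta(v)=\sum_iD^i(v)\wedge z_i+\varphi(v)$ for $v\in W$. (a) $\delta_{\mathfrak z}:\mathfrak z\to\Lambda^2\mathfrak z$ satisfies co-Jacobi; write $\delta_{\mathfrak z}(z_i)=\sum_{a<b}c_i^{ab}z_a\wedge z_b$. (b) $D^i:W\to W$ are linear with $[D^a,D^b]=\sum_ic_i^{ab}D^i$ for $a<b$, and for all $x,y\in W$: $\sum_iT_i(x)(y)\delta_{\mathfrak z}(z_i)=\sum_{i,j}(T_i(D^jx)(y)+T_i(x)(D^jy))z_i\wedge z_j$. (c) $\varphi:W\to\Lambda^2\mathfrak z$, $\varphi(v)=\sum_{a<b}\varphi_{ab}(v)z_a\wedge z_b$, is linear with $\sum_i\varphi(D^iv)\wedge z_i+\sum_{a<b}\varphi_{ab}(v)(\delta_{\mathfrak z}(z_a)\wedge z_b-z_a\wedge\delta_{\mathfrak z}(z_b))=0$ for all $v\in W$.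
   Context: $\mathfrak z$ is the center with basis $z_1,\dots,z_m$, $W$ a linear complement, $T_i:W\to W^*$ defined by $[v,w]=\sum_iT_i(v)(w)z_i$. $\mathfrak n$ is of TST type if the only linear $S:W^*\to W$ with $T_iST_k+T_kST_i=0$ for all $i,k$ is $S=0$. $(\Lambda^2\mathfrak n)^{\mathfrak n}$ is the space of invariants for $\mathrm{ad}_x(a\wedge b)=[x,a]\wedge b+a\wedge[x,b]$. Lie bialgebra structure: linear $\delta:\mathfrak n\to\Lambda^2\mathfrak n$ with co-Jacobi ($\delta(x_1)\wedge x_2-x_1\wedge\delta(x_2)=0$, Sweedler $\delta(x)=x_1\wedge x_2$) and $\delta[x,y]=[\delta x,y]+[x,\delta y]$. *)

theory Defs
  imports Main
begin

text \<open>The Lie algebra n has basis indexed by the finite type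
  'w + 'z: basis vectors Inl p span the complement W, basis vectors Inr i are
  z_1,...,z_m spanning the centre. Elements of
  the exterior square are skew-symmetric matrices (a wedge b has entries
  a_p b_q - a_q b_p), elements of the third exterior power are alternating
  3-tensors. In characteristic zero these are the exterior powers.\<close>

definition unitv :: "'i \<Rightarrow> 'i \<Rightarrow> 'k::field" where
  "unitv r = (\<lambda>s. if s = r then 1 else 0)"

definition skew :: "('i \<Rightarrow> 'i \<Rightarrow> 'k::field) \<Rightarrow> bool" where
  "skew A \<longleftrightarrow> (\<forall>p q. A p q = - A q p)"

definition wedge :: "('i \<Rightarrow> 'k::field) \<Rightarrow> ('i \<Rightarrow> 'k) \<Rightarrow> 'i \<Rightarrow> 'i \<Rightarrow> 'k" where
  "wedge a b = (\<lambda>p q. a p * b q - a q * b p)"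

text \<open>2-form wedge 1-form and 1-form wedge 2-form, as alternating 3-tensors.\<close>
definition wedge21 :: "('i \<Rightarrow> 'i \<Rightarrow> 'k::field) \<Rightarrow> ('i \<Rightarrow> 'k) \<Rightarrow> 'i \<Rightarrow> 'i \<Rightarrow> 'i \<Rightarrow> 'k" where
  "wedge21 B c = (\<lambda>p q r. B p q * c r + B q r * c p + B r p * c q)"

definition wedge12 :: "('i \<Rightarrow> 'k::field) \<Rightarrow> ('i \<Rightarrow> 'i \<Rightarrow> 'k) \<Rightarrow> 'i \<Rightarrow> 'i \<Rightarrow> 'i \<Rightarrow> 'k" where
  "wedge12 a B = (\<lambda>p q r. a p * B q r + a q * B r p + a r * B p q)"

definition linear2 :: "(('i \<Rightarrow> 'k::field) \<Rightarrow> 'i \<Rightarrow> 'i \<Rightarrow> 'k) \<Rightarrow> bool" where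
  "linear2 f \<longleftrightarrow> (\<forall>x y. f (\<lambda>r. x r + y r) = (\<lambda>p q. f x p q + f y p q)) \<and>
                 (\<forall>c x. f (\<lambda>r. c * x r) = (\<lambda>p q. c * f x p q))"

text \<open>co-Jacobi: delta(x_1) wedge x_2 - x_1 wedge delta(x_2) = 0 (Sweedler notation
  delta(x) = x_1 wedge x_2); with delta(x) = sum_{p,q} (A_pq/2) e_p wedge e_q.\<close>
definition cojacobi :: "('i::finite) itself \<Rightarrow> (('i \<Rightarrow> 'k::field) \<Rightarrow> 'i \<Rightarrow> 'i \<Rightarrow> 'k) \<Rightarrow> bool" where
  "cojacobi _ d \<longleftrightarrow> (\<forall>x p' q' r'.
     (\<Sum>p\<in>UNIV. \<Sum>q\<in>UNIV. d x p q / 2 *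
        (wedge21 (d (unitv p)) (unitv q) p' q' r' - wedge12 (unitv p) (d (unitv q)) p' q' r')) = 0)"

definition br :: "('i::finite \<Rightarrow> 'i \<Rightarrow> 'i \<Rightarrow> 'k::field) \<Rightarrow> ('i \<Rightarrow> 'k) \<Rightarrow> ('i \<Rightarrow> 'k) \<Rightarrow> 'i \<Rightarrow> 'k" where
  "br C x y = (\<lambda>r. \<Sum>p\<in>UNIV. \<Sum>q\<in>UNIV. x p * y q * C p q r)"

definition lie_algebra :: "('i::finite \<Rightarrow> 'i \<Rightarrow> 'i \<Rightarrow> 'k::field) \<Rightarrow> bool" where
  "lie_algebra C \<longleftrightarrow> (\<forall>x. br C x x = (\<lambda>_. 0)) \<and>
     (\<forall>x y z. (\<lambda>r. br C x (br C y z) r + br C y (br C z x) r + br C z (br C x y) r) = (\<lambda>_. 0))"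

definition two_step_nilpotent :: "('i::finite \<Rightarrow> 'i \<Rightarrow> 'i \<Rightarrow> 'k::field) \<Rightarrow> bool" where
  "two_step_nilpotent C \<longleftrightarrow> (\<forall>x y z. br C x (br C y z) = (\<lambda>_. 0)) \<and> (\<exists>x y. br C x y \<noteq> (\<lambda>_. 0))"

definition center :: "('i::finite \<Rightarrow> 'i \<Rightarrow> 'i \<Rightarrow> 'k::field) \<Rightarrow> ('i \<Rightarrow> 'k) set" where
  "center C = {x. \<forall>y. br C x y = (\<lambda>_. 0)}"

text \<open>ad_x(a wedge b) = [x,a] wedge b + a wedge [x,b], on skew matrices.\<close>
definition adL :: "('i::finite \<Rightarrow> 'i \<Rightarrow> 'i \<Rightarrow> 'k::field) \<Rightarrow> ('i \<Rightarrow> 'k) \<Rightarrow> ('i \<Rightarrow> 'i \<Rightarrow> 'k) \<Rightarrow> 'i \<Rightarrow> 'i \<Rightarrow> 'k" where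
  "adL C x A = (\<lambda>p q. \<Sum>r\<in>UNIV. br C x (unitv r) p * A r q + A p r * br C x (unitv r) q)"

definition lie_bialgebra :: "('i::finite \<Rightarrow> 'i \<Rightarrow> 'i \<Rightarrow> 'k::field) \<Rightarrow> (('i \<Rightarrow> 'k) \<Rightarrow> 'i \<Rightarrow> 'i \<Rightarrow> 'k) \<Rightarrow> bool" where
  "lie_bialgebra C d \<longleftrightarrow> linear2 d \<and> (\<forall>x. skew (d x)) \<and> cojacobi TYPE('i) d \<and>
     (\<forall>x y. d (br C x y) = (\<lambda>p q. adL C x (d y) p q - adL C y (d x) p q))"

definition embW :: "('w \<Rightarrow> 'k::field) \<Rightarrow> 'w + 'z \<Rightarrow> 'k" where
  "embW v = case_sum v (\<lambda>_. 0)"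

definition embZ :: "('z \<Rightarrow> 'k::field) \<Rightarrow> 'w + 'z \<Rightarrow> 'k" where
  "embZ z = case_sum (\<lambda>_. 0) z"

definition embL2 :: "('z \<Rightarrow> 'z \<Rightarrow> 'k::field) \<Rightarrow> 'w + 'z \<Rightarrow> 'w + 'z \<Rightarrow> 'k" where
  "embL2 B = (\<lambda>p q. case (p, q) of (Inr i, Inr j) \<Rightarrow> B i j | _ \<Rightarrow> 0)"

definition invariants2 :: "('i::finite \<Rightarrow> 'i \<Rightarrow> 'i \<Rightarrow> 'k::field) \<Rightarrow> ('i \<Rightarrow> 'i \<Rightarrow> 'k) set" where
  "invariants2 C = {A. skew A \<and> (\<forall>x. adL C x A = (\<lambda>_ _. 0))}"

definition Lambda2z :: "('w + 'z \<Rightarrow> 'w + 'z \<Rightarrow> 'k::field) set" where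
  "Lambda2z = embL2 ` {B. skew B}"

text \<open>T_i(v)(w) = coefficient of z_i in [v,w]; T_i(v) as covector in W* (coordinates
  w.r.t. the dual basis).\<close>
definition Tform :: "('w::finite + 'z::finite \<Rightarrow> 'w + 'z \<Rightarrow> 'w + 'z \<Rightarrow> 'k::field) \<Rightarrow> 'z \<Rightarrow> ('w \<Rightarrow> 'k) \<Rightarrow> ('w \<Rightarrow> 'k) \<Rightarrow> 'k"
  where "Tform C i v w = br C (embW v) (embW w) (Inr i)"

definition Tcov :: "('w::finite + 'z::finite \<Rightarrow> 'w + 'z \<Rightarrow> 'w + 'z \<Rightarrow> 'k::field) \<Rightarrow> 'z \<Rightarrow> ('w \<Rightarrow> 'k) \<Rightarrow> 'w \<Rightarrow> 'k"
  where "Tcov C i v = (\<lambda>q. Tform C i v (unitv q))"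

text \<open>A linear map S : W* \<rightarrow> W given by its matrix.\<close>
definition Smap :: "('w::finite \<Rightarrow> 'w \<Rightarrow> 'k::field) \<Rightarrow> ('w \<Rightarrow> 'k) \<Rightarrow> 'w \<Rightarrow> 'k" where
  "Smap S f = (\<lambda>p. \<Sum>q\<in>UNIV. S p q * f q)"

definition tst_type :: "('w::finite + 'z::finite \<Rightarrow> 'w + 'z \<Rightarrow> 'w + 'z \<Rightarrow> 'k::field) \<Rightarrow> bool" where
  "tst_type C \<longleftrightarrow> (\<forall>S :: 'w \<Rightarrow> 'w \<Rightarrow> 'k.
     (\<forall>i k v. (\<lambda>q. Tcov C i (Smap S (Tcov C k v)) q + Tcov C k (Smap S (Tcov C i v)) q) = (\<lambda>_. 0))
     \<longrightarrow> S = (\<lambda>_ _. 0))"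

definition matv :: "('w::finite \<Rightarrow> 'w \<Rightarrow> 'k::field) \<Rightarrow> ('w \<Rightarrow> 'k) \<Rightarrow> 'w \<Rightarrow> 'k" where
  "matv M v = (\<lambda>p. \<Sum>q\<in>UNIV. M p q * v q)"

definition linext :: "('j::finite \<Rightarrow> 'i \<Rightarrow> 'i \<Rightarrow> 'k::field) \<Rightarrow> ('j \<Rightarrow> 'k) \<Rightarrow> 'i \<Rightarrow> 'i \<Rightarrow> 'k" where
  "linext F x = (\<lambda>a b. \<Sum>j\<in>UNIV. x j * F j a b)"

end

theory Submission
  imports Defs
begin


lemma mult_if1[simp]: "a * (if c then b else 0) = (if c then a * b else (0::'k::field))" by simp
lemma mult_if2[simp]: "(if c then b else 0) * a = (if c then b * a else (0::'k::field))" by simp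
lemma div_if[simp]: "(if c then b else 0) / a = (if c then b / a else (0::'k::field))" by simp

lemma sum_unitv1[simp]: "(\<Sum>s\<in>(UNIV::'i::finite set). f s * unitv r s) = (f r :: 'k::field)"
  by (simp add: unitv_def)
lemma sum_unitv2[simp]: "(\<Sum>s\<in>(UNIV::'i::finite set). unitv r s * f s) = (f r :: 'k::field)"
  by (simp add: unitv_def)
lemma sum_unitv3[simp]: "(\<Sum>s\<in>(UNIV::'i::finite set). f s * unitv s r) = (f r :: 'k::field)"
  by (simp add: unitv_def)
lemma sum_unitv4[simp]: "(\<Sum>s\<in>(UNIV::'i::finite set). unitv s r * f s) = (f r :: 'k::field)"
  by (simp add: unitv_def)

lemma sumPlus: "(\<Sum>x\<in>(UNIV::('a::finite + 'b::finite) set). f x) = (\<Sum>a\<in>UNIV. f (Inl a)) + (\<Sum>b\<in>UNIV. f (Inr b))"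
proof -
  have "(\<Sum>x\<in>(UNIV::('a + 'b) set). f x) = sum f (UNIV <+> UNIV)" by (simp add: UNIV_Plus_UNIV)
  also have "\<dots> = (\<Sum>a\<in>UNIV. f (Inl a)) + (\<Sum>b\<in>UNIV. f (Inr b))"
    by (subst sum.Plus) (auto simp: comp_def)
  finally show ?thesis .
qed

lemma lin_sum:
  assumes "linear2 f" "finite S"
  shows "f (\<lambda>r. \<Sum>j\<in>S. c j * g j r) = (\<lambda>p q. \<Sum>j\<in>S. c j * f (g j) p q)"
  using assms(2)
proof (induction S rule: finite_induct)
  case empty
  have h: "\<forall>c x. f (\<lambda>r. c * x r) = (\<lambda>p q. c * f x p q)" using assms(1) unfolding linear2_def by blast
  show ?case using h[rule_format, of 0 "\<lambda>_. 0"] by simp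
next
  case (insert j S)
  have "f (\<lambda>r. \<Sum>j\<in>insert j S. c j * g j r) = f (\<lambda>r. (\<lambda>r. c j * g j r) r + (\<lambda>r. \<Sum>j\<in>S. c j * g j r) r)"
    using insert by simp
  also have "\<dots> = (\<lambda>p q. f (\<lambda>r. c j * g j r) p q + f (\<lambda>r. \<Sum>j\<in>S. c j * g j r) p q)"
  proof -
    have h: "\<forall>x y. f (\<lambda>r. x r + y r) = (\<lambda>p q. f x p q + f y p q)" using assms(1) unfolding linear2_def by blast
    show ?thesis using h[rule_format, of "\<lambda>r. c j * g j r" "\<lambda>r. \<Sum>j\<in>S. c j * g j r"] by simp
  qed
  also have "f (\<lambda>r. c j * g j r) = (\<lambda>p q. c j * f (g j) p q)"
  proof -
    have h: "\<forall>c x. f (\<lambda>r. c * x r) = (\<lambda>p q. c * f x p q)" using assms(1) unfolding linear2_def by blast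
    show ?thesis using h[rule_format, of "c j" "g j"] by simp
  qed
  finally show ?case using insert by simp
qed

lemma lin_zero:
  assumes "linear2 f" shows "f (\<lambda>_. 0) = (\<lambda>_ _. 0)"
proof -
  have h: "\<forall>c x. f (\<lambda>r. c * x r) = (\<lambda>p q. c * f x p q)" using assms unfolding linear2_def by blast
  show ?thesis using h[rule_format, of 0 "\<lambda>_. 0"] by simp
qed

lemma dlin:
  assumes "linear2 (f :: ('i::finite \<Rightarrow> 'k::field) \<Rightarrow> _)"
  shows "f x P Q = (\<Sum>R\<in>UNIV. x R * f (unitv R) P Q)"
proof -
  have "f x = f (\<lambda>r. \<Sum>R\<in>UNIV. x R * unitv R r)" by simp
  also have "\<dots> = (\<lambda>p q. \<Sum>R\<in>UNIV. x R * f (unitv R) p q)" by (rule lin_sum[OF assms finite_UNIV, of x unitv])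
  finally show ?thesis by simp
qed

lemma br_unit: "br C (unitv P) (unitv Q) r = C P Q r"
  by (simp add: br_def unitv_def)

lemma cojac_simp:
  fixes d :: "('i::finite \<Rightarrow> 'k::field_char_0) \<Rightarrow> 'i \<Rightarrow> 'i \<Rightarrow> 'k"
  assumes sk: "skew (d x)"
  shows "(\<Sum>P\<in>UNIV. \<Sum>Q\<in>UNIV. d x P Q / 2 *
        (wedge21 (d (unitv P)) (unitv Q) p q r - wedge12 (unitv P) (d (unitv Q)) p q r))
     = (\<Sum>P\<in>UNIV. d x P r * d (unitv P) p q + d x P p * d (unitv P) q r + d x P q * d (unitv P) r p)"
proof -
  have e1: "(\<Sum>P\<in>UNIV. \<Sum>Q\<in>UNIV. d x P Q / 2 * wedge21 (d (unitv P)) (unitv Q) p q r)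
     = (\<Sum>P\<in>UNIV. d x P r / 2 * d (unitv P) p q + d x P p / 2 * d (unitv P) q r + d x P q / 2 * d (unitv P) r p)"
    by (simp add: wedge21_def distrib_left sum.distrib unitv_def)
  have e2: "(\<Sum>P\<in>UNIV. \<Sum>Q\<in>UNIV. d x P Q / 2 * wedge12 (unitv P) (d (unitv Q)) p q r)
     = (\<Sum>Q\<in>UNIV. d x p Q / 2 * d (unitv Q) q r + d x q Q / 2 * d (unitv Q) r p + d x r Q / 2 * d (unitv Q) p q)"
    apply (subst sum.swap)
    by (simp add: wedge12_def distrib_left sum.distrib unitv_def)
  have sk': "\<And>a b. d x a b = - d x b a" using sk unfolding skew_def by blast
  show ?thesis
    unfolding right_diff_distrib sum_subtractf e1 e2
    apply (simp add: sum_subtractf[symmetric] sk'[of p] sk'[of q] sk'[of r] field_simps)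
    apply (rule sum.cong, simp)
    apply (simp add: field_simps)
    done
qed



lemma half_sum:
  fixes f :: "'z::{finite,linorder} \<Rightarrow> 'z \<Rightarrow> 'k::field_char_0"
  assumes sym: "\<And>a b. f a b = f b a" and dg: "\<And>a. f a a = 0"
  shows "(\<Sum>a\<in>UNIV. \<Sum>b\<in>{b. a < b}. f a b) = (\<Sum>a\<in>UNIV. \<Sum>b\<in>UNIV. f a b) / 2"
proof -
  have sp: "\<And>a b. f a b = (if a<b then f a b else 0) + (if b<a then f a b else 0) + (if a=b then f a b else 0)"
    using less_linear[of a b] by auto
  have "(\<Sum>a\<in>UNIV. \<Sum>b\<in>UNIV. f a b) = (\<Sum>a\<in>UNIV. \<Sum>b\<in>UNIV. (if a<b then f a b else 0))
      + (\<Sum>a\<in>UNIV. \<Sum>b\<in>UNIV. (if b<a then f a b else 0)) + (\<Sum>a\<in>UNIV. \<Sum>b\<in>UNIV. (if a=b then f a b else 0))"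
    by (subst sp) (simp add: sum.distrib)
  also have "(\<Sum>a\<in>UNIV. \<Sum>b\<in>UNIV. (if b<a then f a b else 0)) = (\<Sum>b\<in>UNIV. \<Sum>a\<in>UNIV. (if b<a then f b a else 0))"
    by (subst sum.swap) (rule sum.cong[OF refl], rule sum.cong[OF refl], metis sym)
  also have "(\<Sum>a\<in>UNIV. \<Sum>b\<in>UNIV. (if a=b then f a b else 0)) = 0" by (simp add: dg)
  also have "(\<Sum>a\<in>UNIV. \<Sum>b\<in>UNIV. (if a<b then f a b else 0)) = (\<Sum>a\<in>UNIV. \<Sum>b\<in>{b. a < b}. f a b)"
    by (simp add: sum.inter_filter[symmetric])
  finally show ?thesis by simp
qed


lemma sum3_rev: "(\<Sum>a\<in>(UNIV::'a::finite set). \<Sum>b\<in>(UNIV::'b::finite set). \<Sum>c\<in>(UNIV::'c::finite set). f a b c)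
   = (\<Sum>c\<in>UNIV. \<Sum>b\<in>UNIV. \<Sum>a\<in>UNIV. f a b c)"
proof -
  have "(\<Sum>a\<in>(UNIV::'a set). \<Sum>b\<in>(UNIV::'b set). \<Sum>c\<in>(UNIV::'c set). f a b c)
     = (\<Sum>b\<in>UNIV. \<Sum>a\<in>UNIV. \<Sum>c\<in>UNIV. f a b c)" by (rule sum.swap)
  also have "\<dots> = (\<Sum>b\<in>UNIV. \<Sum>c\<in>UNIV. \<Sum>a\<in>UNIV. f a b c)" by (rule sum.cong[OF refl], rule sum.swap)
  also have "\<dots> = (\<Sum>c\<in>UNIV. \<Sum>b\<in>UNIV. \<Sum>a\<in>UNIV. f a b c)" by (rule sum.swap)
  finally show ?thesis .
qed



theorem mainTheorem7:
  fixes C :: "'w::finite + 'z::{finite,linorder} \<Rightarrow> 'w + 'z \<Rightarrow> 'w + 'z \<Rightarrow> 'k::field_char_0"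
    and d :: "('w + 'z \<Rightarrow> 'k) \<Rightarrow> 'w + 'z \<Rightarrow> 'w + 'z \<Rightarrow> 'k"
  assumes lie: "lie_algebra C"
    and nil: "two_step_nilpotent C"
    and cent: "center C = range (embZ :: ('z \<Rightarrow> 'k) \<Rightarrow> _)"
    and tst: "tst_type C"
    and inv: "invariants2 C = Lambda2z"
    and bialg: "lie_bialgebra C d"
  shows "\<exists>(dz :: 'z \<Rightarrow> 'z \<Rightarrow> 'z \<Rightarrow> 'k) (D :: 'z \<Rightarrow> 'w \<Rightarrow> 'w \<Rightarrow> 'k) (Phi :: 'w \<Rightarrow> 'z \<Rightarrow> 'z \<Rightarrow> 'k).
     \<comment> \<open>(a)\<close>
     (\<forall>i. skew (dz i)) \<and> cojacobi TYPE('z) (linext dz) \<and>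
     \<comment> \<open>(b)\<close>
     (\<forall>a b. a < b \<longrightarrow>
        (\<lambda>p q. \<Sum>r\<in>UNIV. D a p r * D b r q - D b p r * D a r q) =
        (\<lambda>p q. \<Sum>i\<in>UNIV. dz i a b * D i p q)) \<and>
     (\<forall>x y. (\<lambda>a b. \<Sum>i\<in>UNIV. Tform C i x y * dz i a b) =
        (\<lambda>a b. \<Sum>i\<in>UNIV. \<Sum>j\<in>UNIV.
            (Tform C i (matv (D j) x) y + Tform C i x (matv (D j) y)) * wedge (unitv i) (unitv j) a b)) \<and>
     \<comment> \<open>(c)\<close>
     (\<forall>p. skew (Phi p)) \<and>
     (\<forall>v. (\<lambda>a b c. (\<Sum>i\<in>UNIV. wedge21 (linext Phi (matv (D i) v)) (unitv i) a b c) +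
          (\<Sum>a'\<in>UNIV. \<Sum>b'\<in>{b'. a' < b'}. linext Phi v a' b' *
              (wedge21 (dz a') (unitv b') a b c - wedge12 (unitv a') (dz b') a b c)))
        = (\<lambda>_ _ _. 0)) \<and>
     \<comment> \<open>form of delta\<close>
     (\<forall>z. d (embZ z) = embL2 (linext dz z)) \<and>
     (\<forall>v. d (embW v) = (\<lambda>P Q. (\<Sum>i\<in>UNIV. wedge (embW (matv (D i) v)) (unitv (Inr i)) P Q)
                                + embL2 (linext Phi v) P Q))"
proof -
  have lin: "linear2 d" and skd: "\<And>x. skew (d x)" and cj: "cojacobi TYPE('w + 'z) d"
    and coc: "\<And>x y. d (br C x y) = (\<lambda>p q. adL C x (d y) p q - adL C y (d x) p q)"
    using bialg unfolding lie_bialgebra_def by blast+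
  have sk: "\<And>x P Q. d x P Q = - d x Q P" using skd unfolding skew_def by blast
  have dl: "\<And>x P Q. d x P Q = (\<Sum>R\<in>UNIV. x R * d (unitv R) P Q)" by (rule dlin[OF lin])
  have brx: "\<And>x. br C x x = (\<lambda>_. 0)" using lie unfolding lie_algebra_def by blast
  have Cdiag: "\<And>P r. C P P r = 0"
  proof -
    fix P r show "C P P r = 0" using fun_cong[OF brx[of "unitv P"], of r] by (simp add: br_unit)
  qed
  have Csk: "\<And>P Q r. C P Q r = - C Q P r"
  proof -
    fix P Q r
    have "br C (\<lambda>s. unitv P s + unitv Q s) (\<lambda>s. unitv P s + unitv Q s) r = 0" using brx by simp
    then have "C P P r + C P Q r + C Q P r + C Q Q r = 0"
      by (simp add: br_def distrib_left distrib_right sum.distrib add_ac unitv_def)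
    then show "C P Q r = - C Q P r" using Cdiag[of P r] Cdiag[of Q r] by (simp add: eq_neg_iff_add_eq_0)
  qed
  have brsk: "\<And>x y r. br C x y r = - br C y x r"
    unfolding br_def
    apply (simp only: sum_negf[symmetric])
    apply (subst sum.swap)
    apply (rule sum.cong[OF refl])+
    apply (subst Csk)
    by (simp add: algebra_simps)
  have brcen: "\<And>x y. br C x y \<in> range (embZ :: ('z \<Rightarrow> 'k) \<Rightarrow> _)"
  proof -
    fix x y
    have "br C x y \<in> center C" unfolding center_def
    proof (intro CollectI allI ext)
      fix w r show "br C (br C x y) w r = 0"
        using brsk[of "br C x y" w r] nil unfolding two_step_nilpotent_def by simp
    qed
    then show "br C x y \<in> range embZ" using cent by simp
  qed
  have Cen: "\<And>P Q w. C P Q (Inl w) = 0"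
  proof -
    fix P Q w
    obtain z where "br C (unitv P) (unitv Q) = embZ z" using brcen[of "unitv P" "unitv Q"] by blast
    then have "br C (unitv P) (unitv Q) (Inl w) = embZ z (Inl w)" by simp
    then show "C P Q (Inl w) = 0" by (simp add: br_unit embZ_def)
  qed
  have eZu: "\<And>i. embZ (unitv i) = (unitv (Inr i) :: 'w + 'z \<Rightarrow> 'k)"
    by (rule ext, simp add: embZ_def unitv_def split: sum.split)
  have eWu: "\<And>i. embW (unitv i) = (unitv (Inl i) :: 'w + 'z \<Rightarrow> 'k)"
    by (rule ext, simp add: embW_def unitv_def split: sum.split)
  have Cz1: "\<And>i Q r. C (Inr i) Q r = 0"
  proof -
    fix i Q r
    have "unitv (Inr i) \<in> center C" using cent eZu[of i] by (metis rangeI)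
    then have "br C (unitv (Inr i)) (unitv Q) = (\<lambda>_. 0)" unfolding center_def by blast
    then show "C (Inr i) Q r = 0" using br_unit[of C "Inr i" Q r] by simp
  qed
  have Cz2: "\<And>i Q r. C Q (Inr i) r = 0" using Cz1 Csk by (metis neg_equal_0_iff_equal)
  define t where "t = (\<lambda>i p q. C (Inl p) (Inl q) (Inr i))"
  have tsk: "\<And>i p q. t i p q = - t i q p" unfolding t_def using Csk by blast
  have Tco: "\<And>i x y. Tform C i x y = (\<Sum>p\<in>UNIV. \<Sum>q\<in>UNIV. x p * y q * t i p q)"
    by (simp add: Tform_def br_def sumPlus embW_def t_def)
  have Tcov_co: "\<And>k v. Tcov C k v = (\<lambda>q. \<Sum>p\<in>UNIV. v p * t k p q)"
    by (rule ext, simp add: Tcov_def Tco unitv_def)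
  have brInl: "\<And>x y w. br C x y (Inl w) = 0" by (simp add: br_def Cen)
  have brZ: "\<And>x j. br C x (unitv (Inr j)) = (\<lambda>_. 0)" by (rule ext, simp add: br_def unitv_def Cz2)
  have brZ': "\<And>x j. br C (unitv (Inr j)) x = (\<lambda>_. 0)" using brsk brZ by (metis neg_equal_0_iff_equal)
  have d0: "d (\<lambda>_. 0) = (\<lambda>_ _. 0)" by (rule lin_zero[OF lin])
  have dZe: "\<And>i. \<exists>B. d (unitv (Inr i)) = embL2 B"
  proof -
    fix i
    have "d (unitv (Inr i)) \<in> invariants2 C" unfolding invariants2_def
    proof (intro CollectI conjI allI)
      show "skew (d (unitv (Inr i)))" by (rule skd)
      fix x
      have "adL C (unitv (Inr i)) (d x) = (\<lambda>_ _. 0)" by (rule ext, rule ext, simp add: adL_def brZ')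
      then show "adL C x (d (unitv (Inr i))) = (\<lambda>_ _. 0)"
        using coc[of x "unitv (Inr i)"] by (simp add: brZ d0)
    qed
    then have "d (unitv (Inr i)) \<in> Lambda2z" using inv by simp
    then show "\<exists>B. d (unitv (Inr i)) = embL2 B" unfolding Lambda2z_def by blast
  qed
  have dZ1: "\<And>i p Q. d (unitv (Inr i)) (Inl p) Q = 0"
  proof -
    fix i p Q obtain B where "d (unitv (Inr i)) = embL2 B" using dZe by blast
    then show "d (unitv (Inr i)) (Inl p) Q = 0" by (simp add: embL2_def)
  qed
  have dZ2: "\<And>i P q. d (unitv (Inr i)) P (Inl q) = 0"
  proof -
    fix i P q obtain B where "d (unitv (Inr i)) = embL2 B" using dZe by blast
    then show "d (unitv (Inr i)) P (Inl q) = 0" by (simp add: embL2_def split: sum.split)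
  qed
  define A where "A = (\<lambda>y p q. d (unitv (Inl y)) (Inl p) (Inl q))"
  have Ask: "\<And>y p q. A y p q = - A y q p" unfolding A_def using sk by blast
  have CocA: "\<And>a x0 y0 q. (\<Sum>s\<in>UNIV. t a x0 s * A y0 s q) = (\<Sum>s\<in>UNIV. t a y0 s * A x0 s q)"
  proof -
    fix a x0 y0 q
    have "d (br C (unitv (Inl x0)) (unitv (Inl y0))) (Inr a) (Inl q) =
      adL C (unitv (Inl x0)) (d (unitv (Inl y0))) (Inr a) (Inl q) - adL C (unitv (Inl y0)) (d (unitv (Inl x0))) (Inr a) (Inl q)"
      using coc by simp
    moreover have "d (br C (unitv (Inl x0)) (unitv (Inl y0))) (Inr a) (Inl q) = 0"
      by (subst dl, simp add: sumPlus brInl dZ2)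
    moreover have "\<And>u w. adL C (unitv (Inl u)) (d (unitv (Inl w))) (Inr a) (Inl q) = (\<Sum>s\<in>UNIV. t a u s * A w s q)"
      by (simp add: adL_def br_unit Cen Cz2 sumPlus t_def A_def)
    ultimately show "(\<Sum>s\<in>UNIV. t a x0 s * A y0 s q) = (\<Sum>s\<in>UNIV. t a y0 s * A x0 s q)" by simp
  qed
  define g where "g = (\<lambda>i k w v y. \<Sum>q'\<in>UNIV. (\<Sum>p\<in>UNIV. t i w p * A y p q') * t k v q')"
  have gsym: "\<And>i k w v y. g i k w v y = g i k y v w"
  proof -
    fix i k w v y show "g i k w v y = g i k y v w" unfolding g_def by (simp only: CocA[of i w y])
  qed
  have gas: "\<And>i k w v y. g i k w v y = - g k i v w y"
  proof -
    fix i k w v y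
    have "g k i v w y = (\<Sum>q'\<in>UNIV. \<Sum>p\<in>UNIV. t k v p * A y p q' * t i w q')"
      unfolding g_def by (simp add: sum_distrib_right)
    also have "\<dots> = (\<Sum>p\<in>UNIV. \<Sum>q'\<in>UNIV. t k v p * A y p q' * t i w q')" by (rule sum.swap)
    also have "\<dots> = (\<Sum>q'\<in>UNIV. \<Sum>p\<in>UNIV. - (t i w p * A y p q' * t k v q'))"
      apply (rule sum.cong[OF refl])+
      apply (subst Ask) by simp
    also have "\<dots> = - g i k w v y" unfolding g_def by (simp add: sum_distrib_right sum_negf)
    finally show "g i k w v y = - g k i v w y" by simp
  qed
  have gik: "\<And>i k w v y. g i k w v y = - g k i w v y"
  proof -
    fix i k w v y
    have "g i k w v y = g i k y v w" by (rule gsym)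
    also have "\<dots> = - g k i v y w" by (rule gas)
    also have "g k i v y w = g k i w y v" by (rule gsym)
    also have "g k i w y v = - g i k y w v" by (rule gas)
    also have "g i k y w v = g i k v w y" by (rule gsym)
    also have "g i k v w y = - g k i w v y" by (rule gas)
    finally show "g i k w v y = - g k i w v y" by simp
  qed
  have Az: "\<And>y. A y = (\<lambda>_ _. 0)"
  proof -
    fix y0
    have key: "\<And>i k v q. Tcov C i (Smap (A y0) (Tcov C k v)) q = - (\<Sum>p2\<in>UNIV. v p2 * g i k q p2 y0)"
    proof -
      fix i k v q
      have "Tcov C i (Smap (A y0) (Tcov C k v)) q = (\<Sum>p\<in>UNIV. \<Sum>q'\<in>UNIV. \<Sum>p2\<in>UNIV. A y0 p q' * (v p2 * t k p2 q') * t i p q)"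
        by (simp add: Tcov_co Smap_def sum_distrib_left sum_distrib_right)
      also have "\<dots> = (\<Sum>p2\<in>UNIV. \<Sum>q'\<in>UNIV. \<Sum>p\<in>UNIV. A y0 p q' * (v p2 * t k p2 q') * t i p q)"
        by (rule sum3_rev)
      also have "\<dots> = (\<Sum>p2\<in>UNIV. \<Sum>q'\<in>UNIV. \<Sum>p\<in>UNIV. - (v p2 * (t i q p * A y0 p q' * t k p2 q')))"
        apply (rule sum.cong[OF refl])+
        apply (subst (2) tsk) by (simp add: algebra_simps)
      also have "\<dots> = - (\<Sum>p2\<in>UNIV. v p2 * g i k q p2 y0)"
        unfolding g_def by (simp add: sum_distrib_left sum_distrib_right sum_negf)
      finally show "Tcov C i (Smap (A y0) (Tcov C k v)) q = - (\<Sum>p2\<in>UNIV. v p2 * g i k q p2 y0)" .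
    qed
    have "\<forall>i k v. (\<lambda>q. Tcov C i (Smap (A y0) (Tcov C k v)) q + Tcov C k (Smap (A y0) (Tcov C i v)) q) = (\<lambda>_. 0)"
    proof (intro allI ext)
      fix i k v q
      have "Tcov C i (Smap (A y0) (Tcov C k v)) q + Tcov C k (Smap (A y0) (Tcov C i v)) q
          = - (\<Sum>p2\<in>UNIV. v p2 * (g i k q p2 y0 + g k i q p2 y0))"
        by (simp add: key distrib_left sum.distrib)
      also have "\<dots> = 0"
      proof -
        have "\<And>p2. g i k q p2 y0 + g k i q p2 y0 = 0"
        proof -
          fix p2 have "g i k q p2 y0 = - g k i q p2 y0" by (rule gik)
          then show "g i k q p2 y0 + g k i q p2 y0 = 0" by simp
        qed
        then show ?thesis by simp
      qed
      finally show "Tcov C i (Smap (A y0) (Tcov C k v)) q + Tcov C k (Smap (A y0) (Tcov C i v)) q = 0" .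
    qed
    then show "A y0 = (\<lambda>_ _. 0)" using tst unfolding tst_type_def by blast
  qed
  have dW0: "\<And>y p q. d (unitv (Inl y)) (Inl p) (Inl q) = 0"
  proof -
    fix y p q show "d (unitv (Inl y)) (Inl p) (Inl q) = 0"
      using fun_cong[OF fun_cong[OF Az[of y], of p], of q] unfolding A_def by simp
  qed
  define dz where "dz = (\<lambda>i a b. d (unitv (Inr i)) (Inr a) (Inr b))"
  define D where "D = (\<lambda>i p q. d (unitv (Inl q)) (Inl p) (Inr i))"
  define Phi where "Phi = (\<lambda>p a b. d (unitv (Inl p)) (Inr a) (Inr b))"
  have eZZ: "\<And>j a b. d (unitv (Inr j)) (Inr a) (Inr b) = dz j a b" by (simp add: dz_def)
  have eWlr: "\<And>s p i. d (unitv (Inl s)) (Inl p) (Inr i) = D i p s" by (simp add: D_def)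
  have eWrl: "\<And>s p i. d (unitv (Inl s)) (Inr i) (Inl p) = - D i p s" by (simp add: D_def sk[of _ "Inr _"])
  have eWrr: "\<And>s a b. d (unitv (Inl s)) (Inr a) (Inr b) = Phi s a b" by (simp add: Phi_def)
  note evs = eZZ eWlr eWrl eWrr dW0 dZ1 dZ2
  have dEZ: "\<And>z. d (embZ z) = embL2 (linext dz z)"
  proof (rule ext, rule ext)
    fix z P Q
    show "d (embZ z) P Q = embL2 (linext dz z) P Q"
      by (subst dl, cases P; cases Q; simp add: sumPlus embZ_def embL2_def linext_def evs)
  qed
  have dEWs: "\<And>v P Q. d (embW v) P Q = (\<Sum>s\<in>UNIV. v s * d (unitv (Inl s)) P Q)"
    by (subst dl, simp add: sumPlus embW_def)
  have W1: "\<And>v p c. d (embW v) (Inl p) (Inr c) = matv (D c) v p"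
    by (simp add: dEWs evs matv_def mult.commute)
  have W2: "\<And>v p c. d (embW v) (Inr c) (Inl p) = - matv (D c) v p"
    by (simp add: dEWs evs matv_def mult.commute sum_negf)
  have W3: "\<And>v a b. d (embW v) (Inr a) (Inr b) = linext Phi v a b"
    by (simp add: dEWs evs linext_def)
  have W4: "\<And>v p q. d (embW v) (Inl p) (Inl q) = 0"
    by (simp add: dEWs evs)
  have embWl: "\<And>u p. embW u (Inl p) = u p" and embWr: "\<And>u i. embW u (Inr i) = 0" by (simp_all add: embW_def)
  have dEW: "\<And>v. d (embW v) = (\<lambda>P Q. (\<Sum>i\<in>UNIV. wedge (embW (matv (D i) v)) (unitv (Inr i)) P Q)
                                + embL2 (linext Phi v) P Q)"
  proof (rule ext, rule ext)
    fix v P Q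
    show "d (embW v) P Q = (\<Sum>i\<in>UNIV. wedge (embW (matv (D i) v)) (unitv (Inr i)) P Q) + embL2 (linext Phi v) P Q"
      by (cases P; cases Q; simp only: W1 W2 W3 W4 wedge_def embWl embWr; simp add: embL2_def unitv_def sum_negf cong: if_cong)
  qed
  have a1: "\<forall>i. skew (dz i)" unfolding skew_def dz_def using sk by blast
  have a2: "cojacobi TYPE('z) (linext dz)"
    unfolding cojacobi_def
  proof (intro allI)
    fix x :: "'z \<Rightarrow> 'k" and p q r
    have lsk: "skew (linext dz x)" unfolding skew_def linext_def sum_negf[symmetric]
    proof (intro allI sum.cong refl)
      fix a b j show "x j * dz j a b = - (x j * dz j b a)" using a1 unfolding skew_def by (metis mult_minus_right)
    qed
    have lu: "\<And>P. linext dz (unitv P) = dz P" by (rule ext, rule ext, simp add: linext_def)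
    have "(\<Sum>P\<in>UNIV. \<Sum>Q\<in>UNIV. d (embZ x) P Q / 2 *
        (wedge21 (d (unitv P)) (unitv Q) (Inr p) (Inr q) (Inr r) - wedge12 (unitv P) (d (unitv Q)) (Inr p) (Inr q) (Inr r))) = 0"
      using cj unfolding cojacobi_def by blast
    then have "(\<Sum>P\<in>UNIV. d (embZ x) P (Inr r) * d (unitv P) (Inr p) (Inr q) + d (embZ x) P (Inr p) * d (unitv P) (Inr q) (Inr r)
       + d (embZ x) P (Inr q) * d (unitv P) (Inr r) (Inr p)) = 0"
      using cojac_simp[where d=d and x="embZ x", OF skd, where p="Inr p" and q="Inr q" and r="Inr r"] by simp
    then have "(\<Sum>P\<in>UNIV. linext dz x P r * dz P p q + linext dz x P p * dz P q r + linext dz x P q * dz P r p) = 0"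
      by (simp add: sumPlus dEZ embL2_def evs)
    then show "(\<Sum>P\<in>UNIV. \<Sum>Q\<in>UNIV. linext dz x P Q / 2 *
        (wedge21 (linext dz (unitv P)) (unitv Q) p q r - wedge12 (unitv P) (linext dz (unitv Q)) p q r)) = 0"
      using cojac_simp[where d="linext dz" and x=x, OF lsk, where p=p and q=q and r=r] by (simp only: lu)
  qed
  have b1: "\<forall>a b. a < b \<longrightarrow>
        (\<lambda>p q. \<Sum>r\<in>UNIV. D a p r * D b r q - D b p r * D a r q) =
        (\<lambda>p q. \<Sum>i\<in>UNIV. dz i a b * D i p q)"
  proof (intro allI impI ext)
    fix a b p q0 :: 'z
    fix p :: 'w and q0 :: 'w
    have "(\<Sum>P\<in>UNIV. \<Sum>Q\<in>UNIV. d (unitv (Inl q0)) P Q / 2 *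
        (wedge21 (d (unitv P)) (unitv Q) (Inl p) (Inr a) (Inr b) - wedge12 (unitv P) (d (unitv Q)) (Inl p) (Inr a) (Inr b))) = 0"
      using cj unfolding cojacobi_def by blast
    then have "(\<Sum>P\<in>UNIV. d (unitv (Inl q0)) P (Inr b) * d (unitv P) (Inl p) (Inr a) + d (unitv (Inl q0)) P (Inl p) * d (unitv P) (Inr a) (Inr b)
       + d (unitv (Inl q0)) P (Inr a) * d (unitv P) (Inr b) (Inl p)) = 0"
      using cojac_simp[where d=d and x="unitv (Inl q0)", OF skd, where p="Inl p" and q="Inr a" and r="Inr b"] by simp
    then have "(\<Sum>r\<in>UNIV. D a p r * D b r q0) - (\<Sum>r\<in>UNIV. D b p r * D a r q0) - (\<Sum>i\<in>UNIV. dz i a b * D i p q0) = 0"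
      by (simp add: sumPlus evs sum.distrib sum_negf algebra_simps)
    then show "(\<Sum>r\<in>UNIV. D a p r * D b r q0 - D b p r * D a r q0) = (\<Sum>i\<in>UNIV. dz i a b * D i p q0)"
      by (simp add: sum_subtractf)
  qed
  have Tlin2: "\<And>i x u. (\<Sum>s\<in>UNIV. Tform C i x (unitv s) * u s) = Tform C i x u"
  proof -
    fix i x u
    have "(\<Sum>s\<in>UNIV. Tform C i x (unitv s) * u s) = (\<Sum>s\<in>UNIV. \<Sum>p\<in>UNIV. x p * u s * t i p s)"
      by (simp add: Tco unitv_def sum_distrib_right sum_distrib_left algebra_simps cong: if_cong)
    also have "\<dots> = Tform C i x u" unfolding Tco by (rule sum.swap)
    finally show "(\<Sum>s\<in>UNIV. Tform C i x (unitv s) * u s) = Tform C i x u" .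
  qed
  have Tanti: "\<And>i x y. Tform C i x y = - Tform C i y x"
  proof -
    fix i x y
    have "Tform C i y x = (\<Sum>p\<in>UNIV. \<Sum>q\<in>UNIV. - (x p * y q * t i p q))"
      unfolding Tco
      apply (subst sum.swap)
      apply (rule sum.cong[OF refl])+
      apply (subst tsk) by simp
    then show "Tform C i x y = - Tform C i y x" unfolding Tco by (simp add: sum_negf)
  qed
  have brW: "\<And>x s a. br C (embW x) (unitv (Inl s)) (Inr a) = Tform C a x (unitv s)"
    by (simp add: Tform_def eWu)
  have adLW: "\<And>x y a b. adL C (embW x) (d (embW y)) (Inr a) (Inr b) = Tform C a x (matv (D b) y) - Tform C b x (matv (D a) y)"
  proof -
    fix x y a b
    have "adL C (embW x) (d (embW y)) (Inr a) (Inr b) = (\<Sum>s\<in>UNIV. Tform C a x (unitv s) * matv (D b) y s)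
       - (\<Sum>s\<in>UNIV. Tform C b x (unitv s) * matv (D a) y s)"
      by (simp add: adL_def sumPlus brZ brW W1 W2 sum_subtractf[symmetric] algebra_simps)
    then show "adL C (embW x) (d (embW y)) (Inr a) (Inr b) = Tform C a x (matv (D b) y) - Tform C b x (matv (D a) y)"
      by (simp only: Tlin2)
  qed
  have b2: "\<forall>x y. (\<lambda>a b. \<Sum>i\<in>UNIV. Tform C i x y * dz i a b) =
        (\<lambda>a b. \<Sum>i\<in>UNIV. \<Sum>j\<in>UNIV.
            (Tform C i (matv (D j) x) y + Tform C i x (matv (D j) y)) * wedge (unitv i) (unitv j) a b)"
  proof (intro allI ext)
    fix x y :: "'w \<Rightarrow> 'k" and a b :: 'z
    have "d (br C (embW x) (embW y)) (Inr a) (Inr b) = adL C (embW x) (d (embW y)) (Inr a) (Inr b) - adL C (embW y) (d (embW x)) (Inr a) (Inr b)"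
      using coc by simp
    moreover have "d (br C (embW x) (embW y)) (Inr a) (Inr b) = (\<Sum>i\<in>UNIV. Tform C i x y * dz i a b)"
      by (subst dl, simp add: sumPlus brInl evs Tform_def)
    moreover have "(\<Sum>i\<in>UNIV. \<Sum>j\<in>UNIV.
            (Tform C i (matv (D j) x) y + Tform C i x (matv (D j) y)) * wedge (unitv i) (unitv j) a b)
        = (Tform C a (matv (D b) x) y + Tform C a x (matv (D b) y)) - (Tform C b (matv (D a) x) y + Tform C b x (matv (D a) y))"
      by (simp add: wedge_def unitv_def right_diff_distrib sum_subtractf cong: if_cong)
    ultimately show "(\<Sum>i\<in>UNIV. Tform C i x y * dz i a b) = (\<Sum>i\<in>UNIV. \<Sum>j\<in>UNIV.
            (Tform C i (matv (D j) x) y + Tform C i x (matv (D j) y)) * wedge (unitv i) (unitv j) a b)"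
      by (simp add: adLW Tanti[of _ y])
  qed
  have c1: "\<forall>p. skew (Phi p)" unfolding skew_def Phi_def using sk by blast
  have c2: "\<forall>v. (\<lambda>a b c. (\<Sum>i\<in>UNIV. wedge21 (linext Phi (matv (D i) v)) (unitv i) a b c) +
          (\<Sum>a'\<in>UNIV. \<Sum>b'\<in>{b'. a' < b'}. linext Phi v a' b' *
              (wedge21 (dz a') (unitv b') a b c - wedge12 (unitv a') (dz b') a b c)))
        = (\<lambda>_ _ _. 0)"
  proof (intro allI ext)
    fix v :: "'w \<Rightarrow> 'k" and a b c :: 'z
    define L where "L = linext Phi v"
    have Lsk: "\<And>x y. L x y = - L y x" unfolding L_def linext_def sum_negf[symmetric]
    proof (rule sum.cong[OF refl])
      fix x y j show "v j * Phi j x y = - (v j * Phi j y x)" using c1 unfolding skew_def by (metis mult_minus_right)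
    qed
    define W where "W = (\<lambda>x y. wedge21 (dz x) (unitv y) a b c)"
    have w12: "\<And>x y. wedge12 (unitv x) (dz y) a b c = W y x" unfolding W_def wedge12_def wedge21_def
      by (simp add: algebra_simps)
    have P1: "(\<Sum>i\<in>UNIV. wedge21 (linext Phi (matv (D i) v)) (unitv i) a b c)
       = (\<Sum>s\<in>UNIV. matv (D c) v s * Phi s a b + matv (D a) v s * Phi s b c + matv (D b) v s * Phi s c a)"
      by (simp add: wedge21_def sum.distrib linext_def unitv_def cong: if_cong)
    have "(\<Sum>a'\<in>UNIV. \<Sum>b'\<in>{b'. a' < b'}. L a' b' * (W a' b' - W b' a'))
       = (\<Sum>a'\<in>UNIV. \<Sum>b'\<in>UNIV. L a' b' * (W a' b' - W b' a')) / 2"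
    proof (rule half_sum)
      fix x y show "L x y * (W x y - W y x) = L y x * (W y x - W x y)" using Lsk[of x y] by (simp add: algebra_simps)
    next
      fix x show "L x x * (W x x - W x x) = 0" by simp
    qed
    also have "(\<Sum>a'\<in>UNIV. \<Sum>b'\<in>UNIV. L a' b' * (W a' b' - W b' a'))
        = (\<Sum>a'\<in>UNIV. \<Sum>b'\<in>UNIV. L a' b' * W a' b') - (\<Sum>a'\<in>UNIV. \<Sum>b'\<in>UNIV. L a' b' * W b' a')"
      by (simp add: right_diff_distrib sum_subtractf)
    also have "(\<Sum>a'\<in>UNIV. \<Sum>b'\<in>UNIV. L a' b' * W b' a') = (\<Sum>a'\<in>UNIV. \<Sum>b'\<in>UNIV. - (L a' b' * W a' b'))"
      apply (subst sum.swap)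
      apply (rule sum.cong[OF refl])+
      apply (subst Lsk) by simp
    finally have P2: "(\<Sum>a'\<in>UNIV. \<Sum>b'\<in>{b'. a' < b'}. L a' b' * (W a' b' - W b' a'))
       = (\<Sum>a'\<in>UNIV. \<Sum>b'\<in>UNIV. L a' b' * W a' b')" by (simp add: sum_negf)
    have P2': "(\<Sum>a'\<in>UNIV. \<Sum>b'\<in>UNIV. L a' b' * W a' b')
       = (\<Sum>j\<in>UNIV. L j c * dz j a b + L j a * dz j b c + L j b * dz j c a)"
      unfolding W_def by (simp add: wedge21_def distrib_left sum.distrib unitv_def algebra_simps cong: if_cong)
    have "(\<Sum>P\<in>UNIV. \<Sum>Q\<in>UNIV. d (embW v) P Q / 2 *
        (wedge21 (d (unitv P)) (unitv Q) (Inr a) (Inr b) (Inr c) - wedge12 (unitv P) (d (unitv Q)) (Inr a) (Inr b) (Inr c))) = 0"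
      using cj unfolding cojacobi_def by blast
    then have "(\<Sum>P\<in>UNIV. d (embW v) P (Inr c) * d (unitv P) (Inr a) (Inr b) + d (embW v) P (Inr a) * d (unitv P) (Inr b) (Inr c)
       + d (embW v) P (Inr b) * d (unitv P) (Inr c) (Inr a)) = 0"
      using cojac_simp[where d=d and x="embW v", OF skd, where p="Inr a" and q="Inr b" and r="Inr c"] by simp
    then have E: "(\<Sum>s\<in>UNIV. matv (D c) v s * Phi s a b + matv (D a) v s * Phi s b c + matv (D b) v s * Phi s c a)
       + (\<Sum>j\<in>UNIV. L j c * dz j a b + L j a * dz j b c + L j b * dz j c a) = 0"
      by (simp add: sumPlus W1 W3 evs L_def)
    show "(\<Sum>i\<in>UNIV. wedge21 (linext Phi (matv (D i) v)) (unitv i) a b c) +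
          (\<Sum>a'\<in>UNIV. \<Sum>b'\<in>{b'. a' < b'}. linext Phi v a' b' *
              (wedge21 (dz a') (unitv b') a b c - wedge12 (unitv a') (dz b') a b c)) = 0"
      unfolding P1 w12 L_def[symmetric] using P2 P2' E unfolding W_def by simp
  qed
  show ?thesis
    apply (rule exI[of _ dz], rule exI[of _ D], rule exI[of _ Phi])
    using a1 a2 b1 b2 c1 c2 dEZ dEW by blast
qed


end
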